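(* Let $K_{2,m_1,m_2}=(Q_0,Q_1)$ be the generalized 2-Kronecker quiver having at least one source and at least one sink. Let $\beta=(n,\dots,n)\in\mathbb{Z}_{\ge0}^{Q_0}$, impose the complete standard filtration at each vertex, and let $\mathbb{U}_\beta=U^{Q_0}$. Then $\mathbb{C}[F^{\bullet}Rep(K_{2,m_1,m_2},\beta)]^{\mathbb{U}_\beta}=\mathbb{C}[\mathfrak{t}^{\oplus Q_1}]$.
   Context: $K_{2,m_1,m_2}$ is a quiver whose underlying graph consists of two vertices $u,v$ joined by two disjoint paths, one passing through $m_1$ intermediate vertices and the other through $m_2$ intermediate vertices (so it is a cycle), with the arrows oriented arbitrarily. At each vertex put $\mathbb{C}^n$ with the flag $0\subset\mathbb{C}^1\subset\cdots\subset\mathbb{C}^n$ of standard coordinate subspaces; $F^{\bullet}Rep(K_{2,m_1,m_2},\beta)=\mathfrak{b}^{\oplus Q_1}$ consists of tuples $(A_a)$ of upper triangular $n\times n$ matrices. $U$ is the group of upper unitriangular $n\times n$ matrices, acting by $(u_i)\cdot(A_a)=(u_{h(a)}A_au_{t(a)}^{-1})$ with $h,t$ head and tail. $\mathbb{C}[\mathfrak{t}^{\oplus Q_1}]$ is the subalgebra generated by the diagonal entries of all $A_a$. *)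

theory Defs
  imports "HOL-Analysis.Analysis" "Jordan_Normal_Form.Matrix"
begin

text \<open>The generalized 2-Kronecker quiver K_{2,m1,m2}: its underlying graph is a cycle
on N = m1 + m2 + 2 vertices 0,...,N-1, with u = 0 and v = m1 + 1. The path
0,1,...,m1+1 has m1 intermediate vertices, the path m1+1,...,N-1,0 has m2.\<close>

definition nverts :: "nat \<Rightarrow> nat \<Rightarrow> nat" where
  "nverts m1 m2 = m1 + m2 + 2"

definition qtail :: "nat \<Rightarrow> nat \<Rightarrow> (nat \<Rightarrow> bool) \<Rightarrow> nat \<Rightarrow> nat" where
  "qtail m1 m2 ori k = (if ori k then k else (k + 1) mod nverts m1 m2)"

definition qhead :: "nat \<Rightarrow> nat \<Rightarrow> (nat \<Rightarrow> bool) \<Rightarrow> nat \<Rightarrow> nat" where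
  "qhead m1 m2 ori k = (if ori k then (k + 1) mod nverts m1 m2 else k)"

definition has_source :: "nat \<Rightarrow> nat \<Rightarrow> (nat \<Rightarrow> bool) \<Rightarrow> bool" where
  "has_source m1 m2 ori = (\<exists>x < nverts m1 m2. \<forall>k < nverts m1 m2. qhead m1 m2 ori k \<noteq> x)"

definition has_sink :: "nat \<Rightarrow> nat \<Rightarrow> (nat \<Rightarrow> bool) \<Rightarrow> bool" where
  "has_sink m1 m2 ori = (\<exists>x < nverts m1 m2. \<forall>k < nverts m1 m2. qtail m1 m2 ori k \<noteq> x)"

text \<open>Points of F Rep(K, beta) = b^{Q1}: one upper triangular n x n complex matrix
per arrow k < N (entries for k >= N are irrelevant junk).\<close>

definition FRep :: "nat \<Rightarrow> nat \<Rightarrow> nat \<Rightarrow> (nat \<Rightarrow> complex mat) set" where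
  "FRep m1 m2 n = {A. \<forall>k < nverts m1 m2. A k \<in> carrier_mat n n \<and> upper_triangular (A k)}"

inductive_set poly_funs :: "nat \<Rightarrow> nat \<Rightarrow> ((nat \<Rightarrow> complex mat) \<Rightarrow> complex) set"
  for N n where
  pf_const: "(\<lambda>A. c) \<in> poly_funs N n"
| pf_coord: "k < N \<Longrightarrow> i < n \<Longrightarrow> j < n \<Longrightarrow> (\<lambda>A. A k $$ (i, j)) \<in> poly_funs N n"
| pf_add: "f \<in> poly_funs N n \<Longrightarrow> g \<in> poly_funs N n \<Longrightarrow> (\<lambda>A. f A + g A) \<in> poly_funs N n"
| pf_mult: "f \<in> poly_funs N n \<Longrightarrow> g \<in> poly_funs N n \<Longrightarrow> (\<lambda>A. f A * g A) \<in> poly_funs N n"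

text \<open>C[t^{Q1}]: the C-algebra generated by the diagonal entries.\<close>

inductive_set diag_funs :: "nat \<Rightarrow> nat \<Rightarrow> ((nat \<Rightarrow> complex mat) \<Rightarrow> complex) set"
  for N n where
  df_const: "(\<lambda>A. c) \<in> diag_funs N n"
| df_coord: "k < N \<Longrightarrow> i < n \<Longrightarrow> (\<lambda>A. A k $$ (i, i)) \<in> diag_funs N n"
| df_add: "f \<in> diag_funs N n \<Longrightarrow> g \<in> diag_funs N n \<Longrightarrow> (\<lambda>A. f A + g A) \<in> diag_funs N n"
| df_mult: "f \<in> diag_funs N n \<Longrightarrow> g \<in> diag_funs N n \<Longrightarrow> (\<lambda>A. f A * g A) \<in> diag_funs N n"

definition unitri :: "nat \<Rightarrow> complex mat set" where
  "unitri n = {u. u \<in> carrier_mat n n \<and> upper_triangular u \<and> (\<forall>i < n. u $$ (i, i) = 1)}"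

definition mat_inv :: "nat \<Rightarrow> complex mat \<Rightarrow> complex mat" where
  "mat_inv n u = (THE v. v \<in> carrier_mat n n \<and> u * v = 1\<^sub>m n \<and> v * u = 1\<^sub>m n)"

definition uact :: "nat \<Rightarrow> nat \<Rightarrow> (nat \<Rightarrow> bool) \<Rightarrow> nat \<Rightarrow> (nat \<Rightarrow> complex mat)
    \<Rightarrow> (nat \<Rightarrow> complex mat) \<Rightarrow> (nat \<Rightarrow> complex mat)" where
  "uact m1 m2 ori n u A = (\<lambda>k. if k < nverts m1 m2
       then u (qhead m1 m2 ori k) * A k * mat_inv n (u (qtail m1 m2 ori k)) else A k)"

definition invariant_polys :: "nat \<Rightarrow> nat \<Rightarrow> (nat \<Rightarrow> bool) \<Rightarrow> nat
    \<Rightarrow> ((nat \<Rightarrow> complex mat) \<Rightarrow> complex) set" where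
  "invariant_polys m1 m2 ori n = {f \<in> poly_funs (nverts m1 m2) n.
     \<forall>u. (\<forall>x < nverts m1 m2. u x \<in> unitri n) \<longrightarrow>
       (\<forall>A \<in> FRep m1 m2 n. f (uact m1 m2 ori n u A) = f A)}"

end

theory Submission
  imports Defs "Jordan_Normal_Form.Determinant" "HOL-Computational_Algebra.Polynomial"
begin

lemma mult_entry:
  assumes "A \<in> carrier_mat n n" "B \<in> carrier_mat n n" "i < n" "j < n"
  shows "(A * B) $$ (i,j) = (\<Sum>k<n. A $$ (i,k) * B $$ (k,j))"
  using assms by (auto simp: scalar_prod_def lessThan_atLeast0 intro!: sum.cong)

lemma sum_single:
  assumes "finite A" "i \<in> A" "\<And>k. k \<in> A \<Longrightarrow> k \<noteq> i \<Longrightarrow> g k = (0::'a::comm_monoid_add)"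
  shows "sum g A = g i"
proof -
  have "sum g A = g i + sum g (A - {i})" using assms sum.remove by metis
  also have "sum g (A - {i}) = 0" using assms by (intro sum.neutral) auto
  finally show ?thesis by simp
qed

lemma ut_mult:
  fixes M N :: "complex mat"
  assumes M: "M \<in> carrier_mat n n" and N: "N \<in> carrier_mat n n"
    and uM: "upper_triangular M" and uN: "upper_triangular N"
  shows "upper_triangular (M * N)" "\<And>i. i < n \<Longrightarrow> (M * N) $$ (i,i) = M $$ (i,i) * N $$ (i,i)"
proof -
  show "upper_triangular (M * N)"
  proof (rule upper_triangularI)
    fix i j assume ji: "j < i" and i: "i < dim_row (M * N)"
    hence i': "i < n" using M by auto
    have "(M * N) $$ (i,j) = (\<Sum>k<n. M $$ (i,k) * N $$ (k,j))"
      using mult_entry[OF M N i'] ji i' by auto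
    also have "\<dots> = 0"
    proof (rule sum.neutral, intro ballI)
      fix k assume k: "k \<in> {..<n}"
      show "M $$ (i,k) * N $$ (k,j) = 0"
      proof (cases "k < i")
        case True thus ?thesis using uM i' M by auto
      next
        case False thus ?thesis using upper_triangularD[OF uN, of j k] k N ji by auto
      qed
    qed
    finally show "(M * N) $$ (i,j) = 0" .
  qed
  fix i assume i: "i < n"
  have "(M * N) $$ (i,i) = (\<Sum>k<n. M $$ (i,k) * N $$ (k,i))"
    using mult_entry[OF M N i i] .
  also have "\<dots> = M $$ (i,i) * N $$ (i,i)"
  proof (rule sum_single)
    fix k assume k: "k \<in> {..<n}" "k \<noteq> i"
    show "M $$ (i,k) * N $$ (k,i) = 0"
    proof (cases "k < i")
      case True thus ?thesis using uM i M by auto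
    next
      case False thus ?thesis using upper_triangularD[OF uN, of i k] k N by auto
    qed
  qed (use i in auto)
  finally show "(M * N) $$ (i,i) = M $$ (i,i) * N $$ (i,i)" .
qed

lemma unitri_inv_ex:
  assumes "u \<in> unitri n"
  shows "\<exists>v. v \<in> carrier_mat n n \<and> u * v = 1\<^sub>m n \<and> v * u = 1\<^sub>m n"
proof -
  have u: "u \<in> carrier_mat n n" "upper_triangular u" "\<And>i. i < n \<Longrightarrow> u $$ (i,i) = 1"
    using assms unfolding unitri_def by auto
  have "det u = prod_list (diag_mat u)" by (rule det_upper_triangular[OF u(2) u(1)])
  also have "\<dots> = 1"
  proof -
    have "diag_mat u = replicate n 1" using u by (intro nth_equalityI) (auto simp: diag_mat_def)
    thus ?thesis by simp
  qed
  finally have "det u \<noteq> 0" by simp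
  from det_non_zero_imp_unit[OF u(1) this, of undefined]
  show ?thesis unfolding Units_def ring_mat_def by auto
qed

lemma mat_inv_props:
  assumes "u \<in> unitri n"
  shows "mat_inv n u \<in> carrier_mat n n \<and> u * mat_inv n u = 1\<^sub>m n \<and> mat_inv n u * u = 1\<^sub>m n"
proof -
  have uc: "u \<in> carrier_mat n n" using assms unfolding unitri_def by auto
  obtain v where v: "v \<in> carrier_mat n n \<and> u * v = 1\<^sub>m n \<and> v * u = 1\<^sub>m n"
    using unitri_inv_ex[OF assms] by blast
  show ?thesis unfolding mat_inv_def
  proof (rule theI[of _ v])
    fix w assume w: "w \<in> carrier_mat n n \<and> u * w = 1\<^sub>m n \<and> w * u = 1\<^sub>m n"
    have "w = w * (u * v)" using v w by auto
    also have "\<dots> = (w * u) * v" using v w uc by (metis assoc_mult_mat)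
    also have "\<dots> = v" using v w by auto
    finally show "w = v" .
  qed (use v in auto)
qed

lemma inv_unitri:
  fixes u V :: "complex mat"
  assumes u: "u \<in> unitri n" and V: "V \<in> carrier_mat n n" and Vu: "V * u = 1\<^sub>m n"
  shows "upper_triangular V" "\<And>i. i < n \<Longrightarrow> V $$ (i,i) = 1"
proof -
  have uc: "u \<in> carrier_mat n n" "upper_triangular u" "\<And>i. i < n \<Longrightarrow> u $$ (i,i) = 1"
    using u unfolding unitri_def by auto
  have low: "\<forall>i. j < i \<and> i < n \<longrightarrow> V $$ (i,j) = 0" for j
  proof (induction j rule: less_induct)
    case (less j)
    show ?case
    proof (intro allI impI)
      fix i assume ji: "j < i \<and> i < n"
      have "0 = (V * u) $$ (i,j)" using Vu ji by auto
      also have "\<dots> = (\<Sum>k<n. V $$ (i,k) * u $$ (k,j))" using mult_entry[OF V uc(1)] ji by auto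
      also have "\<dots> = V $$ (i,j) * u $$ (j,j)"
      proof (rule sum_single)
        fix k assume k: "k \<in> {..<n}" "k \<noteq> j"
        show "V $$ (i,k) * u $$ (k,j) = 0"
        proof (cases "k < j")
          case True thus ?thesis using less.IH[of k] ji by auto
        next
          case False thus ?thesis using upper_triangularD[OF uc(2), of j k] uc(1) k by auto
        qed
      qed (use ji in auto)
      also have "\<dots> = V $$ (i,j)" using uc ji by auto
      finally show "V $$ (i,j) = 0" by simp
    qed
  qed
  show "upper_triangular V" using low V by auto
  fix i assume i: "i < n"
  have "1 = (V * u) $$ (i,i)" using Vu i by auto
  also have "\<dots> = (\<Sum>k<n. V $$ (i,k) * u $$ (k,i))" using mult_entry[OF V uc(1)] i by auto
  also have "\<dots> = V $$ (i,i) * u $$ (i,i)"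
  proof (rule sum_single)
    fix k assume k: "k \<in> {..<n}" "k \<noteq> i"
    show "V $$ (i,k) * u $$ (k,i) = 0"
    proof (cases "k < i")
      case True thus ?thesis using low[of k] i by auto
    next
      case False thus ?thesis using upper_triangularD[OF uc(2), of i k] uc(1) k by auto
    qed
  qed (use i in auto)
  also have "\<dots> = V $$ (i,i)" using uc i by auto
  finally show "V $$ (i,i) = 1" by simp
qed

fun affM :: "(nat \<Rightarrow> complex) \<Rightarrow> (nat \<Rightarrow> complex) \<Rightarrow> nat \<Rightarrow> complex" where
  "affM c e 0 = 0"
| "affM c e (Suc k) = c k * affM c e k + e k"

lemma cycle_solve:
  fixes \<alpha> \<beta> r :: "nat \<Rightarrow> complex"
  assumes a: "\<forall>k<nverts m1 m2. \<alpha> k \<noteq> 0" and b: "\<forall>k<nverts m1 m2. \<beta> k \<noteq> 0"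
    and P: "(\<Prod>k<nverts m1 m2. if ori k then \<alpha> k else \<beta> k) \<noteq> (\<Prod>k<nverts m1 m2. if ori k then \<beta> k else \<alpha> k)"
  shows "\<exists>s. \<forall>k<nverts m1 m2. \<beta> k * s (qhead m1 m2 ori k) - \<alpha> k * s (qtail m1 m2 ori k) = r k"
proof -
  define N where "N = nverts m1 m2"
  have N: "N \<ge> 1" unfolding N_def nverts_def by simp
  define num where "num k = (if ori k then \<alpha> k else \<beta> k)" for k
  define den where "den k = (if ori k then \<beta> k else \<alpha> k)" for k
  define c where "c k = num k / den k" for k
  define e where "e k = (if ori k then r k / \<beta> k else - r k / \<alpha> k)" for k
  define L where "L k = (\<Prod>l<k. c l)" for k
  have dnz: "(\<Prod>k<N. den k) \<noteq> 0" using a b unfolding den_def N_def by (auto simp: prod_zero_iff)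
  have "L N = (\<Prod>k<N. num k) / (\<Prod>k<N. den k)"
    unfolding L_def c_def by (rule prod_dividef)
  hence LN: "L N \<noteq> 1" using P dnz unfolding num_def den_def N_def by auto
  define s0 where "s0 = affM c e N / (1 - L N)"
  define s where "s x = L x * s0 + affM c e x" for x
  have s0': "s 0 = s0" unfolding s_def L_def by simp
  have sN: "s N = s0" unfolding s_def s0_def using LN by (simp add: field_simps)
  have step: "s (Suc k) = c k * s k + e k" for k
    unfolding s_def L_def by (simp add: algebra_simps)
  have hs: "s ((k+1) mod N) = s (Suc k)" if "k < N" for k
  proof (cases "k + 1 = N")
    case True thus ?thesis using sN s0' by simp
  next
    case False thus ?thesis using that by simp
  qed
  show ?thesis
  proof (intro exI allI impI)
    fix k assume k: "k < nverts m1 m2"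
    hence kN: "k < N" unfolding N_def .
    have ak: "\<alpha> k \<noteq> 0" and bk: "\<beta> k \<noteq> 0" using a b k by auto
    show "\<beta> k * s (qhead m1 m2 ori k) - \<alpha> k * s (qtail m1 m2 ori k) = r k"
    proof (cases "ori k")
      case True
      hence "\<beta> k * s (qhead m1 m2 ori k) - \<alpha> k * s (qtail m1 m2 ori k)
          = \<beta> k * s (Suc k) - \<alpha> k * s k"
        unfolding qhead_def qtail_def using hs[OF kN] N_def by simp
      also have "\<dots> = r k" unfolding step c_def num_def den_def e_def using True ak bk
        by (simp add: field_simps)
      finally show ?thesis .
    next
      case False
      hence "\<beta> k * s (qhead m1 m2 ori k) - \<alpha> k * s (qtail m1 m2 ori k)
          = \<beta> k * s k - \<alpha> k * s (Suc k)"
        unfolding qhead_def qtail_def using hs[OF kN] N_def by simp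
      also have "\<dots> = r k" unfolding step c_def num_def den_def e_def using False ak bk
        by (simp add: field_simps)
      finally show ?thesis .
    qed
  qed
qed


definition Ument :: "(nat \<Rightarrow> nat \<Rightarrow> nat \<Rightarrow> complex) \<Rightarrow> nat \<Rightarrow> nat \<Rightarrow> nat \<Rightarrow> complex" where
  "Ument s x i k = (if i = k then 1 else if i < k then s x i k else 0)"

definition Rk where
  "Rk m1 m2 ori (A :: nat \<Rightarrow> complex mat) s k i j =
     (\<Sum>l<j. Ument s (qhead m1 m2 ori k) i l * A k $$ (l,j))"

lemma col_exists:
  assumes nz: "\<forall>k<nverts m1 m2. \<forall>i<n. A k $$ (i,i) \<noteq> 0"
    and pr: "\<forall>i j. i < j \<longrightarrow> j < n \<longrightarrow>
      (\<Prod>k<nverts m1 m2. if ori k then A k $$ (i,i) else A k $$ (j,j))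
      \<noteq> (\<Prod>k<nverts m1 m2. if ori k then A k $$ (j,j) else A k $$ (i,i))"
  shows "\<exists>s. \<forall>k<nverts m1 m2. \<forall>i j. i < j \<and> j < m \<and> j < n \<longrightarrow>
     A k $$ (j,j) * s (qhead m1 m2 ori k) i j - A k $$ (i,i) * s (qtail m1 m2 ori k) i j
       = - Rk m1 m2 ori A s k i j"
proof (induction m)
  case 0 show ?case by auto
next
  case (Suc m)
  then obtain s where s: "\<forall>k<nverts m1 m2. \<forall>i j. i < j \<and> j < m \<and> j < n \<longrightarrow>
     A k $$ (j,j) * s (qhead m1 m2 ori k) i j - A k $$ (i,i) * s (qtail m1 m2 ori k) i j
       = - Rk m1 m2 ori A s k i j" by blast
  show ?case
  proof (cases "m < n")
    case False thus ?thesis using s by (intro exI[of _ s]) auto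
  next
    case True
    have "\<forall>i. \<exists>v. i < m \<longrightarrow> (\<forall>k<nverts m1 m2. A k $$ (m,m) * v (qhead m1 m2 ori k)
       - A k $$ (i,i) * v (qtail m1 m2 ori k) = - Rk m1 m2 ori A s k i m)"
    proof
      fix i
      show "\<exists>v. i < m \<longrightarrow> (\<forall>k<nverts m1 m2. A k $$ (m,m) * v (qhead m1 m2 ori k)
       - A k $$ (i,i) * v (qtail m1 m2 ori k) = - Rk m1 m2 ori A s k i m)"
      proof (cases "i < m")
        case True
        show ?thesis
          using cycle_solve[of m1 m2 "\<lambda>k. A k $$ (i,i)" "\<lambda>k. A k $$ (m,m)" ori
              "\<lambda>k. - Rk m1 m2 ori A s k i m"] nz pr True \<open>m < n\<close> by auto
      qed auto
    qed
    then obtain sol where sol: "\<And>i. i < m \<Longrightarrow> (\<forall>k<nverts m1 m2. A k $$ (m,m) * sol i (qhead m1 m2 ori k)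
       - A k $$ (i,i) * sol i (qtail m1 m2 ori k) = - Rk m1 m2 ori A s k i m)"
      by metis
    define s' where "s' x i j = (if j = m then sol i x else s x i j)" for x i j
    have R: "Rk m1 m2 ori A s' k i j = Rk m1 m2 ori A s k i j" if "j \<le> m" for k i j
      unfolding Rk_def using that by (intro sum.cong) (auto simp: Ument_def s'_def)
    show ?thesis
    proof (intro exI[of _ s'] allI impI)
      fix k i j assume k: "k < nverts m1 m2" and ij: "i < j \<and> j < Suc m \<and> j < n"
      show "A k $$ (j,j) * s' (qhead m1 m2 ori k) i j - A k $$ (i,i) * s' (qtail m1 m2 ori k) i j
       = - Rk m1 m2 ori A s' k i j"
      proof (cases "j = m")
        case True thus ?thesis using sol[of i] k ij R[of j k i] by (auto simp: s'_def)
      next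
        case False thus ?thesis using s k ij R[of j k i] by (auto simp: s'_def)
      qed
    qed
  qed
qed

definition Dg :: "nat \<Rightarrow> (nat \<Rightarrow> complex mat) \<Rightarrow> nat \<Rightarrow> complex mat" where
  "Dg n A = (\<lambda>k. mat n n (\<lambda>(i,j). if i = j then A k $$ (i,i) else 0))"

lemma orbit:
  assumes AF: "A \<in> FRep m1 m2 n"
    and nz: "\<forall>k<nverts m1 m2. \<forall>i<n. A k $$ (i,i) \<noteq> 0"
    and pr: "\<forall>i j. i < j \<longrightarrow> j < n \<longrightarrow>
      (\<Prod>k<nverts m1 m2. if ori k then A k $$ (i,i) else A k $$ (j,j))
      \<noteq> (\<Prod>k<nverts m1 m2. if ori k then A k $$ (j,j) else A k $$ (i,i))"
  shows "\<exists>u. (\<forall>x<nverts m1 m2. u x \<in> unitri n) \<and>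
    (\<forall>k<nverts m1 m2. u (qhead m1 m2 ori k) * A k * mat_inv n (u (qtail m1 m2 ori k)) = Dg n A k)"
proof -
  obtain s where s: "\<forall>k<nverts m1 m2. \<forall>i j. i < j \<and> j < n \<and> j < n \<longrightarrow>
     A k $$ (j,j) * s (qhead m1 m2 ori k) i j - A k $$ (i,i) * s (qtail m1 m2 ori k) i j
       = - Rk m1 m2 ori A s k i j"
    using col_exists[OF nz pr, of n] by blast
  define u where "u x = mat n n (\<lambda>(i,j). Ument s x i j)" for x
  have uc: "u x \<in> carrier_mat n n" for x unfolding u_def by auto
  have uu: "u x \<in> unitri n" for x
    unfolding unitri_def using uc by (auto simp: u_def Ument_def upper_triangular_def)
  show ?thesis
  proof (intro exI[of _ u] conjI allI impI)
    fix x show "u x \<in> unitri n" by (rule uu)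
  next
    fix k assume k: "k < nverts m1 m2"
    define h where "h = qhead m1 m2 ori k"
    define t where "t = qtail m1 m2 ori k"
    have Ak: "A k \<in> carrier_mat n n" "upper_triangular (A k)" using AF k unfolding FRep_def by auto
    have Dc: "Dg n A k \<in> carrier_mat n n" unfolding Dg_def by auto
    have key: "u h * A k = Dg n A k * u t"
    proof (rule eq_matI)
      fix i j assume i: "i < dim_row (Dg n A k * u t)" and j: "j < dim_col (Dg n A k * u t)"
      hence i: "i < n" and j: "j < n" using uc[of t] Dc by auto
      define g where "g l = Ument s h i l * A k $$ (l,j)" for l
      have "(u h * A k) $$ (i,j) = (\<Sum>l<n. g l)"
        using mult_entry[OF uc Ak(1) i j] i j unfolding g_def by (auto simp: u_def intro!: sum.cong)
      also have "\<dots> = (\<Sum>l<Suc j. g l)"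
      proof (rule sum.mono_neutral_right)
        show "\<forall>l\<in>{..<n} - {..<Suc j}. g l = 0"
          using upper_triangularD[OF Ak(2)] Ak(1) unfolding g_def by auto
      qed (use j in auto)
      also have "\<dots> = Rk m1 m2 ori A s k i j + Ument s h i j * A k $$ (j,j)"
        unfolding Rk_def g_def h_def by simp
      finally have L: "(u h * A k) $$ (i,j) = Rk m1 m2 ori A s k i j + Ument s h i j * A k $$ (j,j)" .
      have "(Dg n A k * u t) $$ (i,j) = (\<Sum>l<n. Dg n A k $$ (i,l) * u t $$ (l,j))"
        using mult_entry[OF Dc uc i j] .
      also have "\<dots> = Dg n A k $$ (i,i) * u t $$ (i,j)"
        by (rule sum_single) (use i in \<open>auto simp: Dg_def\<close>)
      also have "\<dots> = A k $$ (i,i) * Ument s t i j" using i j by (simp add: Dg_def u_def)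
      finally have R: "(Dg n A k * u t) $$ (i,j) = A k $$ (i,i) * Ument s t i j" .
      have "Rk m1 m2 ori A s k i j + Ument s h i j * A k $$ (j,j) = A k $$ (i,i) * Ument s t i j"
      proof (cases "i < j")
        case True
        thus ?thesis using s k j unfolding h_def t_def Ument_def by (auto simp: algebra_simps)
      next
        case False
        have R0: "Rk m1 m2 ori A s k i j = 0"
          unfolding Rk_def using False by (intro sum.neutral) (auto simp: Ument_def)
        show ?thesis using False R0 by (auto simp: Ument_def)
      qed
      thus "(u h * A k) $$ (i,j) = (Dg n A k * u t) $$ (i,j)" using L R by simp
    qed (use uc[of t] uc[of h] Dc Ak in auto)
    have inv: "u t * mat_inv n (u t) = 1\<^sub>m n" "mat_inv n (u t) \<in> carrier_mat n n"
      using mat_inv_props[OF uu] by auto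
    have "u h * A k * mat_inv n (u t) = Dg n A k * u t * mat_inv n (u t)" using key by simp
    also have "\<dots> = Dg n A k * (u t * mat_inv n (u t))"
      using assoc_mult_mat[OF Dc uc inv(2)] .
    also have "\<dots> = Dg n A k" using inv Dc by simp
    finally show "u (qhead m1 m2 ori k) * A k * mat_inv n (u (qtail m1 m2 ori k)) = Dg n A k"
      unfolding h_def t_def .
  qed
qed

lemma pf_local:
  assumes "f \<in> poly_funs N n" "\<forall>k<N. \<forall>i<n. \<forall>j<n. B k $$ (i,j) = C k $$ (i,j)"
  shows "f B = f C"
  using assms by (induction rule: poly_funs.induct) auto

lemma pf_poly:
  assumes "f \<in> poly_funs N n"
    and "\<And>k i j. k < N \<Longrightarrow> i < n \<Longrightarrow> j < n \<Longrightarrow> \<exists>q. \<forall>t. B t k $$ (i,j) = poly q t"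
  shows "\<exists>p. \<forall>t. f (B t) = poly p t"
  using assms
proof (induction rule: poly_funs.induct)
  case (pf_const c) show ?case by (intro exI[of _ "[:c:]"]) auto
next
  case (pf_coord k i j) thus ?case by auto
next
  case (pf_add f g)
  then obtain p q where "\<forall>t. f (B t) = poly p t" "\<forall>t. g (B t) = poly q t" by blast
  thus ?case by (intro exI[of _ "p + q"]) auto
next
  case (pf_mult f g)
  then obtain p q where "\<forall>t. f (B t) = poly p t" "\<forall>t. g (B t) = poly q t" by blast
  thus ?case by (intro exI[of _ "p * q"]) auto
qed

lemma pf_diag:
  assumes "f \<in> poly_funs N n"
  shows "\<exists>h \<in> diag_funs N n. \<forall>A. f (Dg n A) = h A"
  using assms
proof (induction rule: poly_funs.induct)
  case (pf_const c) show ?case by (intro bexI[of _ "\<lambda>A. c"]) (auto intro: diag_funs.intros)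
next
  case (pf_coord k i j)
  show ?case
  proof (cases "i = j")
    case True
    thus ?thesis using pf_coord
      by (intro bexI[of _ "\<lambda>A. A k $$ (i,i)"]) (auto intro: diag_funs.intros simp: Dg_def)
  next
    case False
    thus ?thesis using pf_coord
      by (intro bexI[of _ "\<lambda>A. 0"]) (auto intro: diag_funs.intros simp: Dg_def)
  qed
next
  case (pf_add f g)
  then obtain p q where "p \<in> diag_funs N n" "q \<in> diag_funs N n"
    "\<forall>A. f (Dg n A) = p A" "\<forall>A. g (Dg n A) = q A" by blast
  thus ?case by (intro bexI[of _ "\<lambda>A. p A + q A"]) (auto intro: diag_funs.intros)
next
  case (pf_mult f g)
  then obtain p q where "p \<in> diag_funs N n" "q \<in> diag_funs N n"
    "\<forall>A. f (Dg n A) = p A" "\<forall>A. g (Dg n A) = q A" by blast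
  thus ?case by (intro bexI[of _ "\<lambda>A. p A * q A"]) (auto intro: diag_funs.intros)
qed

lemma df_pf: "g \<in> diag_funs N n \<Longrightarrow> g \<in> poly_funs N n"
  by (induction rule: diag_funs.induct) (auto intro: poly_funs.intros)

lemma df_local:
  assumes "g \<in> diag_funs N n" "\<forall>k<N. \<forall>i<n. B k $$ (i,i) = C k $$ (i,i)"
  shows "g B = g C"
  using assms by (induction rule: diag_funs.induct) auto

lemma uact_diag:
  assumes AF: "A \<in> FRep m1 m2 n" and u: "\<forall>x<nverts m1 m2. u x \<in> unitri n"
    and k: "k < nverts m1 m2" and i: "i < n"
  shows "uact m1 m2 ori n u A k $$ (i,i) = A k $$ (i,i)"
proof -
  define h where "h = qhead m1 m2 ori k"
  define t where "t = qtail m1 m2 ori k"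
  have hN: "h < nverts m1 m2" "t < nverts m1 m2"
    unfolding h_def t_def qhead_def qtail_def using k by (auto simp: nverts_def)
  have uh: "u h \<in> carrier_mat n n" "upper_triangular (u h)" "\<And>i. i < n \<Longrightarrow> u h $$ (i,i) = 1"
    using u hN unfolding unitri_def by auto
  have ut: "u t \<in> unitri n" using u hN by auto
  have V: "mat_inv n (u t) \<in> carrier_mat n n" "mat_inv n (u t) * u t = 1\<^sub>m n"
    using mat_inv_props[OF ut] by auto
  have Vt: "upper_triangular (mat_inv n (u t))" "\<And>i. i < n \<Longrightarrow> mat_inv n (u t) $$ (i,i) = 1"
    using inv_unitri[OF ut V] by auto
  have Ak: "A k \<in> carrier_mat n n" "upper_triangular (A k)" using AF k unfolding FRep_def by auto
  have P1: "upper_triangular (u h * A k)" "(u h * A k) $$ (i,i) = A k $$ (i,i)"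
    using ut_mult[OF uh(1) Ak(1) uh(2) Ak(2)] uh(3)[OF i] i by auto
  have "(u h * A k * mat_inv n (u t)) $$ (i,i) = (u h * A k) $$ (i,i) * mat_inv n (u t) $$ (i,i)"
    using ut_mult[OF mult_carrier_mat[OF uh(1) Ak(1)] V(1) P1(1) Vt(1)] i by auto
  also have "\<dots> = A k $$ (i,i)" using P1 Vt i by simp
  finally show ?thesis unfolding uact_def using k h_def t_def by simp
qed

lemma lin_prod_coeff:
  fixes a b :: "nat \<Rightarrow> complex"
  assumes "\<forall>k<N. b k \<noteq> 0"
  shows "coeff (\<Prod>k<N. [:a k, b k:]) N = (\<Prod>k<N. b k)"
proof -
  have d: "degree (\<Prod>k<N. [:a k, b k:]) = N"
    using assms by (subst degree_prod_eq_sum_degree) auto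
  have "lead_coeff (\<Prod>k<N. [:a k, b k:]) = (\<Prod>k<N. b k)"
    using assms by (simp add: lead_coeff_prod)
  thus ?thesis using d by simp
qed

lemma generic_eq:
  assumes f: "f \<in> invariant_polys m1 m2 ori n" and AF: "A \<in> FRep m1 m2 n"
    and nz: "\<forall>k<nverts m1 m2. \<forall>i<n. A k $$ (i,i) \<noteq> 0"
    and pr: "\<forall>i j. i < j \<longrightarrow> j < n \<longrightarrow>
      (\<Prod>k<nverts m1 m2. if ori k then A k $$ (i,i) else A k $$ (j,j))
      \<noteq> (\<Prod>k<nverts m1 m2. if ori k then A k $$ (j,j) else A k $$ (i,i))"
  shows "f A = f (Dg n A)"
proof -
  have fp: "f \<in> poly_funs (nverts m1 m2) n"
    and finv: "\<And>u. \<forall>x<nverts m1 m2. u x \<in> unitri n \<Longrightarrow> f (uact m1 m2 ori n u A) = f A"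
    using f AF unfolding invariant_polys_def by auto
  obtain u where u: "\<forall>x<nverts m1 m2. u x \<in> unitri n"
    "\<forall>k<nverts m1 m2. u (qhead m1 m2 ori k) * A k * mat_inv n (u (qtail m1 m2 ori k)) = Dg n A k"
    using orbit[OF AF nz pr] by blast
  have "f A = f (uact m1 m2 ori n u A)" using finv[OF u(1)] by simp
  also have "\<dots> = f (Dg n A)"
    by (rule pf_local[OF fp]) (use u(2) in \<open>auto simp: uact_def\<close>)
  finally show ?thesis .
qed

lemma density:
  assumes f: "f \<in> invariant_polys m1 m2 ori n" and AF: "A \<in> FRep m1 m2 n"
  shows "f A = f (Dg n A)"
proof -
  define N where "N = nverts m1 m2"
  have N1: "N \<ge> 1" unfolding N_def nverts_def by simp
  have fp: "f \<in> poly_funs N n" using f unfolding invariant_polys_def N_def by auto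
  define w where "w (k::nat) (i::nat) = (if k = 0 then of_nat (i+1) else (1::complex))" for k i
  have wnz: "w k i \<noteq> 0" for k i
  proof -
    have "(of_nat (i+1)::complex) \<noteq> 0" by (simp only: of_nat_eq_0_iff)
    thus ?thesis unfolding w_def by auto
  qed
  define W where "W (k::nat) = mat n n (\<lambda>(i,j). if i = j then w k i else 0)" for k
  define At where "At t = (\<lambda>k. A k + t \<cdot>\<^sub>m W k)" for t
  have Ak: "\<And>k. k < N \<Longrightarrow> A k \<in> carrier_mat n n \<and> upper_triangular (A k)"
    using AF unfolding FRep_def N_def by auto
  have Ate: "At t k $$ (i,j) = A k $$ (i,j) + t * (if i = j then w k i else 0)"
    if "k < N" "i < n" "j < n" for t k i j
    using Ak[OF that(1)] that unfolding At_def W_def by auto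
  have AtF: "At t \<in> FRep m1 m2 n" for t
    unfolding FRep_def
  proof (intro CollectI allI impI conjI)
    fix k assume k: "k < nverts m1 m2"
    show "At t k \<in> carrier_mat n n" using Ak[of k] k unfolding At_def W_def N_def by auto
    show "upper_triangular (At t k)"
    proof (rule upper_triangularI)
      fix i j assume "j < i" "i < dim_row (At t k)"
      thus "At t k $$ (i,j) = 0" using Ak[of k] k Ate[of k i j t] unfolding At_def W_def N_def
        by auto
    qed
  qed
  define numP where "numP i j = (\<Prod>k<N. [: if ori k then A k $$ (i,i) else A k $$ (j,j),
     if ori k then w k i else w k j :])" for i j
  define denP where "denP i j = (\<Prod>k<N. [: if ori k then A k $$ (j,j) else A k $$ (i,i),
     if ori k then w k j else w k i :])" for i j
  define PP where "PP i j = numP i j - denP i j" for i j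
  have PPnz: "PP i j \<noteq> 0" if ij: "i < j" for i j
  proof -
    have "coeff (numP i j) N = (\<Prod>k<N. if ori k then w k i else w k j)"
      unfolding numP_def by (rule lin_prod_coeff) (auto simp: wnz)
    also have "\<dots> = (\<Prod>k<N. if k = 0 then (if ori 0 then of_nat (i+1) else of_nat (j+1)) else 1)"
      by (intro prod.cong) (auto simp: w_def)
    also have "\<dots> = (if ori 0 then of_nat (i+1) else of_nat (j+1))" using N1 by simp
    finally have c1: "coeff (numP i j) N = (if ori 0 then of_nat (i+1) else of_nat (j+1))" .
    have "coeff (denP i j) N = (\<Prod>k<N. if ori k then w k j else w k i)"
      unfolding denP_def by (rule lin_prod_coeff) (auto simp: wnz)
    also have "\<dots> = (\<Prod>k<N. if k = 0 then (if ori 0 then of_nat (j+1) else of_nat (i+1)) else 1)"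
      by (intro prod.cong) (auto simp: w_def)
    also have "\<dots> = (if ori 0 then of_nat (j+1) else of_nat (i+1))" using N1 by simp
    finally have c2: "coeff (denP i j) N = (if ori 0 then of_nat (j+1) else of_nat (i+1))" .
    have "coeff (PP i j) N \<noteq> 0" unfolding PP_def using c1 c2 ij by auto
    thus ?thesis by auto
  qed
  define Bad where "Bad = (\<Union>k<N. \<Union>i<n. {t. A k $$ (i,i) + t * w k i = 0})
      \<union> (\<Union>i<n. \<Union>j<n. if i < j then {t. poly (PP i j) t = 0} else {})"
  have finBad: "finite Bad"
  proof -
    have "finite {t. A k $$ (i,i) + t * w k i = 0}" for k i
    proof (rule finite_subset)
      show "{t. A k $$ (i,i) + t * w k i = 0} \<subseteq> {- A k $$ (i,i) / w k i}"
        using wnz[of k i] by (auto simp: field_simps eq_neg_iff_add_eq_0)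
    qed auto
    moreover have "i < j \<Longrightarrow> finite {t. poly (PP i j) t = 0}" for i j
      using PPnz[of i j] poly_roots_finite by auto
    ultimately show ?thesis unfolding Bad_def by auto
  qed
  have good: "f (At t) = f (Dg n (At t))" if t: "t \<notin> Bad" for t
  proof (rule generic_eq[OF f AtF])
    show "\<forall>k<nverts m1 m2. \<forall>i<n. At t k $$ (i,i) \<noteq> 0"
      using t Ate unfolding Bad_def N_def by (auto simp: algebra_simps)
    show "\<forall>i j. i < j \<longrightarrow> j < n \<longrightarrow>
      (\<Prod>k<nverts m1 m2. if ori k then At t k $$ (i,i) else At t k $$ (j,j))
      \<noteq> (\<Prod>k<nverts m1 m2. if ori k then At t k $$ (j,j) else At t k $$ (i,i))"
    proof (intro allI impI)
      fix i j assume ij: "i < j" "j < n"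
      have "poly (PP i j) t \<noteq> 0" using t ij unfolding Bad_def by auto
      moreover have "poly (numP i j) t = (\<Prod>k<nverts m1 m2. if ori k then At t k $$ (i,i) else At t k $$ (j,j))"
        unfolding numP_def poly_prod N_def using ij Ate[unfolded N_def]
        by (intro prod.cong) (auto simp: algebra_simps)
      moreover have "poly (denP i j) t = (\<Prod>k<nverts m1 m2. if ori k then At t k $$ (j,j) else At t k $$ (i,i))"
        unfolding denP_def poly_prod N_def using ij Ate[unfolded N_def]
        by (intro prod.cong) (auto simp: algebra_simps)
      ultimately show "(\<Prod>k<nverts m1 m2. if ori k then At t k $$ (i,i) else At t k $$ (j,j))
      \<noteq> (\<Prod>k<nverts m1 m2. if ori k then At t k $$ (j,j) else At t k $$ (i,i))"
        unfolding PP_def by auto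
    qed
  qed
  obtain p1 where p1: "\<forall>t. f (At t) = poly p1 t"
  proof -
    have "\<exists>p. \<forall>t. f (At t) = poly p t"
    proof (rule pf_poly[OF fp])
      fix k i j assume "k < N" "i < n" "j < n"
      thus "\<exists>q. \<forall>t. At t k $$ (i,j) = poly q t"
        using Ate by (intro exI[of _ "[:A k $$ (i,j), if i = j then w k i else 0:]"]) (auto simp: algebra_simps)
    qed
    thus ?thesis using that by blast
  qed
  obtain p2 where p2: "\<forall>t. f (Dg n (At t)) = poly p2 t"
  proof -
    have "\<exists>p. \<forall>t. f (Dg n (At t)) = poly p t"
    proof (rule pf_poly[OF fp])
      fix k i j assume "k < N" "i < n" "j < n"
      thus "\<exists>q. \<forall>t. Dg n (At t) k $$ (i,j) = poly q t"
        using Ate by (intro exI[of _ "if i = j then [:A k $$ (i,i), w k i:] else 0"])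
          (auto simp: algebra_simps Dg_def)
    qed
    thus ?thesis using that by blast
  qed
  have "p1 - p2 = 0"
  proof (rule ccontr)
    assume "p1 - p2 \<noteq> 0"
    hence "finite {t. poly (p1 - p2) t = 0}" by (rule poly_roots_finite)
    moreover have "UNIV \<subseteq> Bad \<union> {t. poly (p1 - p2) t = 0}"
      using good p1 p2 by auto
    ultimately have "finite (UNIV :: complex set)" using finBad finite_subset by blast
    thus False using infinite_UNIV_char_0 by blast
  qed
  hence "f (At 0) = f (Dg n (At 0))" using p1 p2 by simp
  moreover have "f (At 0) = f A"
    by (rule pf_local[OF fp]) (use Ate in auto)
  moreover have "f (Dg n (At 0)) = f (Dg n A)"
    by (rule pf_local[OF fp]) (use Ate in \<open>auto simp: Dg_def\<close>)
  ultimately show ?thesis by simp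
qed

theorem mainTheorem5:
  fixes m1 m2 n :: nat and ori :: "nat \<Rightarrow> bool"
  assumes "has_source m1 m2 ori" and "has_sink m1 m2 ori"
  shows "(\<lambda>f. restrict f (FRep m1 m2 n)) ` invariant_polys m1 m2 ori n
       = (\<lambda>f. restrict f (FRep m1 m2 n)) ` diag_funs (nverts m1 m2) n"
proof (intro equalityI subsetI)
  fix F assume "F \<in> (\<lambda>f. restrict f (FRep m1 m2 n)) ` invariant_polys m1 m2 ori n"
  then obtain f where f: "f \<in> invariant_polys m1 m2 ori n" and F: "F = restrict f (FRep m1 m2 n)"
    by blast
  have fp: "f \<in> poly_funs (nverts m1 m2) n" using f unfolding invariant_polys_def by auto
  obtain h where h: "h \<in> diag_funs (nverts m1 m2) n" "\<forall>A. f (Dg n A) = h A"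
    using pf_diag[OF fp] by blast
  have "restrict f (FRep m1 m2 n) = restrict h (FRep m1 m2 n)"
    using density[OF f] h(2) by (auto simp: restrict_def)
  thus "F \<in> (\<lambda>f. restrict f (FRep m1 m2 n)) ` diag_funs (nverts m1 m2) n"
    using F h(1) by auto
next
  fix F assume "F \<in> (\<lambda>f. restrict f (FRep m1 m2 n)) ` diag_funs (nverts m1 m2) n"
  then obtain g where g: "g \<in> diag_funs (nverts m1 m2) n" and F: "F = restrict g (FRep m1 m2 n)"
    by blast
  have "g \<in> invariant_polys m1 m2 ori n"
    unfolding invariant_polys_def
  proof (intro CollectI conjI allI impI ballI)
    show "g \<in> poly_funs (nverts m1 m2) n" using df_pf[OF g] .
    fix u A assume u: "\<forall>x<nverts m1 m2. u x \<in> unitri n" and A: "A \<in> FRep m1 m2 n"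
    show "g (uact m1 m2 ori n u A) = g A"
      by (rule df_local[OF g]) (use uact_diag[OF A u] in auto)
  qed
  thus "F \<in> (\<lambda>f. restrict f (FRep m1 m2 n)) ` invariant_polys m1 m2 ori n"
    using F by auto
qed

end
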